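(* Let $d$ be an integer and $x$ a real number with $0<d\leqslant x$. Let $K_d$ be the largest integer $k$ such that $(k-d)k\leqslant dx$ (i.e. $K_d=\lfloor (d+\sqrt{d^2+4dx})/2\rfloor$), and let $N_d$ be the largest integer $n$ such that $n(n+1)\leqslant x/d$ (i.e. $N_d=\lfloor(-1+\sqrt{1+4x/d}\,)/2\rfloor$). Then $$\lfloor x/(K_d+1)\rfloor \leqslant N_d \leqslant \lfloor x/K_d\rfloor.$$
   Context: $\lfloor t\rfloor$ denotes the integer part of the real number $t$. *)

theory Defs
  imports Complex_Main
begin

definition K :: "int \<Rightarrow> real \<Rightarrow> int" where
  "K d x = (GREATEST k::int. real_of_int ((k - d) * k) \<le> real_of_int d * x)"

definition N :: "int \<Rightarrow> real \<Rightarrow> int" where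
  "N d x = (GREATEST n::int. real_of_int (n * (n + 1)) \<le> x / real_of_int d)"

end

theory Submission
  imports Defs
begin

lemma int_greatest:
  fixes P :: "int \<Rightarrow> bool"
  assumes "P a" "\<And>k. P k \<Longrightarrow> k \<le> b"
  shows "P (GREATEST k. P k) \<and> (\<forall>k. P k \<longrightarrow> k \<le> (GREATEST k. P k))"
proof -
  define S where "S = {k. a \<le> k \<and> k \<le> b \<and> P k}"
  have fin: "finite S" unfolding S_def by (rule finite_subset[of _ "{a..b}"]) auto
  have aS: "a \<in> S" using assms unfolding S_def by auto
  define m where "m = Max S"
  have mS: "m \<in> S" using fin aS unfolding m_def by (intro Max_in) auto
  have am: "a \<le> m" using fin aS unfolding m_def by auto
  have ge: "k \<le> m" if "P k" for k
  proof (cases "a \<le> k")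
    case True
    then have "k \<in> S" using that assms(2) unfolding S_def by auto
    then show ?thesis using fin unfolding m_def by auto
  next
    case False then show ?thesis using am by auto
  qed
  have Pm: "P m" using mS unfolding S_def by auto
  have "(GREATEST k. P k) = m" by (rule Greatest_equality) (use Pm ge in auto)
  then show ?thesis using Pm ge by auto
qed

theorem proposition4:
  fixes d :: int and x :: real
  assumes "0 < d" and "real_of_int d \<le> x"
  shows "\<lfloor>x / real_of_int (K d x + 1)\<rfloor> \<le> N d x
         \<and> N d x \<le> \<lfloor>x / real_of_int (K d x)\<rfloor>"
proof -
  have d0: "real_of_int d > 0" using assms by simp
  have x0: "x > 0" using assms by simp
  have dx0: "real_of_int d * x \<ge> 0" using d0 x0 by simp
  have Kb: "k \<le> d + \<lceil>real_of_int d * x\<rceil>" if "real_of_int ((k - d) * k) \<le> real_of_int d * x" for k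
  proof (cases "k \<le> d")
    case True then show ?thesis using dx0 by linarith
  next
    case False
    then have "1 * k \<le> (k - d) * k" using assms(1) by (intro mult_right_mono) auto
    then have "real_of_int k \<le> real_of_int ((k - d) * k)"
      by (simp only: of_int_le_iff mult_1_left)
    then have "real_of_int k \<le> real_of_int \<lceil>real_of_int d * x\<rceil>"
      using that le_of_int_ceiling[of "real_of_int d * x"] by linarith
    then have "k \<le> \<lceil>real_of_int d * x\<rceil>" by (simp only: of_int_le_iff)
    then show ?thesis using assms(1) by linarith
  qed
  have Kg: "real_of_int ((d - d) * d) \<le> real_of_int d * x" using dx0 by simp
  from int_greatest[where P="\<lambda>k. real_of_int ((k - d) * k) \<le> real_of_int d * x", OF Kg Kb] have
    K1: "real_of_int ((K d x - d) * K d x) \<le> real_of_int d * x" and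
    K2: "\<And>k. real_of_int ((k - d) * k) \<le> real_of_int d * x \<Longrightarrow> k \<le> K d x"
    unfolding K_def by auto
  have Nb: "n \<le> 1 + \<lceil>x / real_of_int d\<rceil>" if "real_of_int (n * (n + 1)) \<le> x / real_of_int d" for n
  proof (cases "n \<le> 1")
    case True
    have "0 < x / real_of_int d" using x0 d0 by simp
    then have "real_of_int 0 < real_of_int \<lceil>x / real_of_int d\<rceil>"
      using le_of_int_ceiling[of "x / real_of_int d"] by linarith
    then have "0 < \<lceil>x / real_of_int d\<rceil>" by (simp only: of_int_less_iff)
    with True show ?thesis by linarith
  next
    case False
    then have "real_of_int n \<le> real_of_int (n * (n + 1))"
      by (simp add: mult_le_cancel_left1)
    then have "real_of_int n \<le> real_of_int \<lceil>x / real_of_int d\<rceil>"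
      using that le_of_int_ceiling[of "x / real_of_int d"] by linarith
    then have "n \<le> \<lceil>x / real_of_int d\<rceil>" by (simp only: of_int_le_iff)
    then show ?thesis by linarith
  qed
  have Ng: "real_of_int (0 * (0 + 1)) \<le> x / real_of_int d" using x0 d0 by simp
  from int_greatest[where P="\<lambda>n. real_of_int (n * (n + 1)) \<le> x / real_of_int d", OF Ng Nb] have
    N1: "real_of_int (N d x * (N d x + 1)) \<le> x / real_of_int d" and
    N2: "\<And>n. real_of_int (n * (n + 1)) \<le> x / real_of_int d \<Longrightarrow> n \<le> N d x"
    unfolding N_def by auto
  define k where "k = K d x"
  define n where "n = N d x"
  have Kd: "d \<le> k" unfolding k_def using K2[OF Kg] .
  have n0: "n \<ge> 0" unfolding n_def using N2[OF Ng] by simp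
  have k1: "\<not> real_of_int ((k + 1 - d) * (k + 1)) \<le> real_of_int d * x"
    using K2[of "k+1"] unfolding k_def by auto
  have n1: "\<not> real_of_int ((n + 1) * (n + 1 + 1)) \<le> x / real_of_int d"
    using N2[of "n+1"] unfolding n_def by auto
  have k1': "real_of_int d * x < (real_of_int k + 1 - real_of_int d) * (real_of_int k + 1)"
    using k1 by simp
  have n1': "x < real_of_int d * ((real_of_int n + 1) * (real_of_int n + 2))"
    using n1 d0 by (simp add: field_simps)
  have K1': "(real_of_int k - real_of_int d) * real_of_int k \<le> real_of_int d * x"
    using K1 unfolding k_def by simp
  have N1': "real_of_int d * (real_of_int n * (real_of_int n + 1)) \<le> x"
    using N1 d0 unfolding n_def by (simp add: field_simps)
  have kpos: "real_of_int k > 0" using Kd assms(1) by simp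
  have np: "real_of_int n \<ge> 0" using n0 by simp
  have A: "x < (real_of_int n + 1) * (real_of_int k + 1)"
  proof (rule ccontr)
    assume "\<not> ?thesis"
    hence h: "(real_of_int n + 1) * (real_of_int k + 1) \<le> x" by simp
    have "real_of_int d * ((real_of_int n + 1) * (real_of_int k + 1)) < (real_of_int k + 1 - real_of_int d) * (real_of_int k + 1)"
      using mult_left_mono[OF h, of "real_of_int d"] d0 k1' by linarith
    hence "real_of_int d * (real_of_int n + 1) < real_of_int k + 1 - real_of_int d"
      using kpos by (simp add: mult.assoc mult.commute mult.left_commute)
    moreover have "(real_of_int n + 1) * (real_of_int k + 1) < (real_of_int n + 1) * (real_of_int d * (real_of_int n + 2))"
      using h n1' by (simp add: mult.assoc mult.commute mult.left_commute)
    hence "real_of_int k + 1 < real_of_int d * (real_of_int n + 2)"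
      using np by (simp add: mult_less_cancel_left_pos)
    ultimately show False by (simp add: algebra_simps)
  qed
  have B: "real_of_int n * real_of_int k \<le> x"
  proof (cases "n = 0")
    case True then show ?thesis using x0 by simp
  next
    case False
    hence npos: "real_of_int n > 0" using n0 by simp
    show ?thesis
    proof (rule ccontr)
      assume "\<not> ?thesis"
      hence h: "x < real_of_int n * real_of_int k" by simp
      have "(real_of_int k - real_of_int d) * real_of_int k < real_of_int d * real_of_int n * real_of_int k"
        using K1' mult_strict_left_mono[OF h d0] by (simp add: mult.assoc)
      hence "real_of_int k - real_of_int d < real_of_int d * real_of_int n"
        using kpos by simp
      moreover have "real_of_int n * (real_of_int d * (real_of_int n + 1)) < real_of_int n * real_of_int k"
        using N1' h by (simp add: mult.assoc mult.commute mult.left_commute)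
      hence "real_of_int d * (real_of_int n + 1) < real_of_int k"
        using npos by simp
      ultimately show False by (simp add: algebra_simps)
    qed
  qed
  have "x / real_of_int (k + 1) < real_of_int n + 1"
    using A kpos by (simp add: divide_less_eq)
  hence C1: "\<lfloor>x / real_of_int (k + 1)\<rfloor> \<le> n" by linarith
  have "real_of_int n \<le> x / real_of_int k" using B kpos by (simp add: le_divide_eq)
  hence C2: "n \<le> \<lfloor>x / real_of_int k\<rfloor>" by linarith
  show ?thesis using C1 C2 unfolding k_def n_def by simp
qed

end
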